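(* Let $d \ge 1$, $p \in [0,1/2)$, $\mathbf{x} \in \mathbb{R}^d$, $G > 0$, $\lambda > 0$. Let measurements $y_k = \langle \mathbf{x}, \mathbf{a}_k\rangle + \epsilon_k$ ($k = 0,1,\dots$) be given, where $\epsilon_k = \xi_k\nu_k$ with $\xi_k$ an indicator equal to $1$ with probability $p$, independent of all other variables, and $\nu_k$ arbitrary (possibly dependent on $\mathbf{x}$ and the measurement vectors). Let $\mathcal{F}_k$ be the $\sigma$-algebra generated by $\{\mathbf{a}_0,\epsilon_0\},\dots,\{\mathbf{a}_{k-1},\epsilon_{k-1}\}$, and assume each $\mathbf{a}_k \in \mathbb{R}^d$ has unit norm and is independent of $\mathcal{F}_k$, the vectors $\sqrt d\,\mathbf{a}_k$ are i.i.d. mean-zero isotropic, and for every $\mathcal{F}_k$-measurable $\mathbf{u}$, $\mathbb{E}_{\mathbf{a}_k}[|\langle \mathbf{u},\mathbf{a}_k\rangle| \mid \mathbf{u}] \ge \widetilde{C}\|\mathbf{u}\|_2/\sqrt d$ for a constant $\widetilde C > 0$. Let $\mathbf{x}_0 = 0$, $\mathbf{x}_{k+1} = \mathbf{x}_k + G\lambda^{-k}\mathrm{sign}(y_k - \langle \mathbf{x}_k,\mathbf{a}_k\rangle)\mathbf{a}_k$, $\mathbf{u}_k := \lambda^k(\mathbf{x} - \mathbf{x}_k)/G$ and $Y_k := \|\mathbf{u}_k\|_2^2$, so that $$Y_{k+1} = \lambda^2\Big\{\|\mathbf{u}_k\|^2 - 2\langle \mathbf{u}_k,\mathbf{a}_k\rangle\,\mathrm{sign}\big(\langle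 \mathbf{u}_k,\mathbf{a}_k\rangle + \lambda^k\epsilon_k/G\big) + 1\Big\}.$$ Suppose $$1 < \lambda^2 \le 1 + \widetilde{C}^2\frac{(1-2p)^2}{49d} < \frac{50}{49},$$ and set $a = \frac{1}{2(\lambda^2-1)}$, $\eta = c^*\sqrt{\lambda^2-1}$ with $$c^* = \frac{1}{8\lambda^2}\Big[\frac{\lambda^2(1-2p)\widetilde C}{\sqrt2\sqrt d} - \sqrt{\lambda^2-1}\Big(\frac32 + \frac{\lambda^2}{2}\Big)\Big].$$ Then $$\mathbb{E}\big[e^{\eta(Y_{k+1} - a)}\mathbb{1}_{\{Y_k < a\}} \mid \mathcal{F}_k\big] \le \exp\Big\{\frac{\widetilde C(1-2p)}{6\sqrt d}\Big\}.$$
   Context: $\mathrm{sign}$ is the sign function. *)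

theory Defs
  imports "HOL-Analysis.Analysis" "HOL-Probability.Probability"
begin

text \<open>Sign function with the convention sign 0 = 1, so that sign t squared is 1 for all t
  (needed for the displayed recursion of Y (k+1) in the paper).\<close>
definition sign :: "real \<Rightarrow> real" where
  "sign t = (if t < 0 then -1 else 1)"

definition gen_events :: "'a measure \<Rightarrow> ('a \<Rightarrow> 'b::topological_space) \<Rightarrow> 'a set set" where
  "gen_events M X = {X -` B \<inter> space M | B. B \<in> sets borel}"

fun iterate :: "real \<Rightarrow> real \<Rightarrow> (nat \<Rightarrow> 'a \<Rightarrow> real ^ 'd) \<Rightarrow> (nat \<Rightarrow> 'a \<Rightarrow> real)
    \<Rightarrow> nat \<Rightarrow> 'a \<Rightarrow> real ^ 'd" where
  "iterate G lam a y 0 \<omega> = 0"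
| "iterate G lam a y (Suc k) \<omega> = iterate G lam a y k \<omega> +
     (G * inverse lam ^ k * sign (y k \<omega> - iterate G lam a y k \<omega> \<bullet> a k \<omega>)) *\<^sub>R a k \<omega>"

end

theory Submission
  imports Defs
begin

lemma realineq:
  fixes r s t L :: real
  assumes r: "r > 0" "r^2 = 2" and s: "s > 0" "s \<le> t/7" and t: "t < 1" and L: "L = 1 + s^2"
  shows "s/(8*L) * (L*t/r - s*(3+L)/2) * (1/2 + r*L/s + L) \<le> t/6"
    and "L*t/r - s*(3+L)/2 > 0"
proof -
  have r1: "r \<ge> 1.4" "r \<le> 1.5"
  proof -
    show "r \<ge> 1.4"
    proof (rule ccontr)
      assume "\<not> r \<ge> 1.4" then have "r*r < 1.4*1.4" using r by (intro mult_strict_mono) auto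
      then show False using r by (simp add: power2_eq_square)
    qed
    show "r \<le> 1.5"
    proof (rule ccontr)
      assume "\<not> r \<le> 1.5" then have "1.5*1.5 < r*r" using r by (intro mult_strict_mono) auto
      then show False using r by (simp add: power2_eq_square)
    qed
  qed
  have tp: "t > 0" using s by linarith
  have "s * s \<le> (t/7)*(t/7)" using s by (intro mult_mono) auto
  moreover have "t*t \<le> 1" using tp t by (simp add: mult_le_one)
  ultimately have Lb: "L \<ge> 1" "L \<le> 50/49" using L by (auto simp: power2_eq_square)
  define c where "c = L*t/r - s*(3+L)/2"
  have cpos: "c > 0"
  proof -
    have "L*t/r \<ge> t/1.5" using Lb r1 tp by (simp add: field_simps)
    moreover have "s*(3+L)/2 \<le> (t/7)*(3+50/49)/2" using s Lb by (intro divide_right_mono mult_mono) auto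
    ultimately show ?thesis unfolding c_def using tp by argo
  qed
  then show "L*t/r - s*(3+L)/2 > 0" by (simp add: c_def)
  have "s/(8*L) * c * (1/2 + r*L/s + L) = c*r/8 + c* s*(1/2+L)/(8*L)"
    using s Lb by (simp add: field_simps)
  also have "c*r/8 = L*t/8 - s*r*(3+L)/16" unfolding c_def using r by (simp add: field_simps)
  also have "c* s*(1/2+L)/(8*L) \<le> (L*t/r)* s*(1/2+L)/(8*L)"
    using cpos s Lb unfolding c_def by (intro divide_right_mono mult_right_mono) auto
  also have "(L*t/r)* s*(1/2+L)/(8*L) = t* s*(1/2+L)/(8*r)" using Lb r by (simp add: field_simps)
  also have "t* s*(1/2+L)/(8*r) \<le> s*(1/2+L)/(8*r)"
    using t s r Lb by (intro divide_right_mono mult_right_mono) auto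
  also have "s*(1/2+L)/(8*r) = s*r*(1/2+L)/16"
  proof -
    have rr: "r*(r*z) = 2*z" for z using r by (simp add: mult.assoc[symmetric] power2_eq_square)
    show ?thesis using r by (simp add: field_simps rr)
  qed
  finally have "s/(8*L) * c * (1/2 + r*L/s + L) \<le> L*t/8 - s*r*(3+L)/16 + s*r*(1/2+L)/16" by simp
  also have "\<dots> \<le> L*t/8" using s r by (simp add: field_simps)
  also have "\<dots> \<le> t/6" using Lb tp by simp
  finally show "s/(8*L) * (L*t/r - s*(3+L)/2) * (1/2 + r*L/s + L) \<le> t/6" by (simp add: c_def)
qed

lemma sqrt2_rr: "sqrt 2 * (sqrt 2 * z) = 2 * (z::real)" by (simp add: mult.assoc[symmetric])

theorem lemma5p3:
  fixes M :: "'w measure"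
    and x :: "real ^ 'd"
    and a :: "nat \<Rightarrow> 'w \<Rightarrow> real ^ 'd"
    and \<xi> \<nu> \<epsilon> y :: "nat \<Rightarrow> 'w \<Rightarrow> real"
    and F :: "nat \<Rightarrow> 'w measure"
    and p G lam Ct :: real
    and k :: nat
  assumes prob: "prob_space M"
    and p: "0 \<le> p" "p < 1/2"
    and G: "G > 0"
    and lam: "lam > 0"
    and Ct: "Ct > 0"
    and meas_a: "\<And>j. a j \<in> borel_measurable M"
    and meas_\<xi>: "\<And>j. \<xi> j \<in> borel_measurable M"
    and meas_\<nu>: "\<And>j. \<nu> j \<in> borel_measurable M"
    and \<xi>_01: "\<And>j \<omega>. \<omega> \<in> space M \<Longrightarrow> \<xi> j \<omega> \<in> {0, 1}"
    and \<xi>_prob: "\<And>j. measure M {\<omega> \<in> space M. \<xi> j \<omega> = 1} = p"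
    and \<xi>_indep: "\<And>j. prob_space.indep_set M (gen_events M (\<xi> j))
        (sigma_sets (space M) (\<Union>i. gen_events M (a i) \<union> gen_events M (\<nu> i)
                                     \<union> (if i = j then {} else gen_events M (\<xi> i))))"
    and \<epsilon>_def: "\<And>j \<omega>. \<epsilon> j \<omega> = \<xi> j \<omega> * \<nu> j \<omega>"
    and y_def: "\<And>j \<omega>. y j \<omega> = x \<bullet> a j \<omega> + \<epsilon> j \<omega>"
    and F_def: "\<And>j. F j = sigma (space M) (\<Union>i<j. gen_events M (a i) \<union> gen_events M (\<epsilon> i))"
    and a_unit: "\<And>j \<omega>. \<omega> \<in> space M \<Longrightarrow> norm (a j \<omega>) = 1"
    and a_indep_F: "\<And>j. prob_space.indep_set M (gen_events M (a j)) (sets (F j))"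
    and a_indep: "prob_space.indep_vars M (\<lambda>_. borel) (\<lambda>j \<omega>. sqrt (CARD('d)) *\<^sub>R a j \<omega>) UNIV"
    and a_ident: "\<And>j. distr M borel (\<lambda>\<omega>. sqrt (CARD('d)) *\<^sub>R a j \<omega>)
                       = distr M borel (\<lambda>\<omega>. sqrt (CARD('d)) *\<^sub>R a 0 \<omega>)"
    and a_mean0: "\<And>j i. prob_space.expectation M (\<lambda>\<omega>. sqrt (CARD('d)) * a j \<omega> $ i) = 0"
    and a_iso: "\<And>j i i'. prob_space.expectation M
                   (\<lambda>\<omega>. (sqrt (CARD('d)) * a j \<omega> $ i) * (sqrt (CARD('d)) * a j \<omega> $ i'))
                 = (if i = i' then 1 else 0)"
    and small_ball: "\<And>j v. prob_space.expectation M (\<lambda>\<omega>. \<bar>v \<bullet> a j \<omega>\<bar>)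
                              \<ge> Ct * norm v / sqrt (CARD('d))"
    and lam_bounds: "1 < lam\<^sup>2"
      "lam\<^sup>2 \<le> 1 + Ct\<^sup>2 * (1 - 2 * p)\<^sup>2 / (49 * CARD('d))"
      "1 + Ct\<^sup>2 * (1 - 2 * p)\<^sup>2 / (49 * CARD('d)) < 50 / 49"
  defines "Y \<equiv> \<lambda>j \<omega>. (norm ((lam ^ j / G) *\<^sub>R (x - iterate G lam a y j \<omega>)))\<^sup>2"
    and "thr \<equiv> 1 / (2 * (lam\<^sup>2 - 1))"
    and "\<eta> \<equiv> (1 / (8 * lam\<^sup>2) * (lam\<^sup>2 * (1 - 2 * p) * Ct / (sqrt 2 * sqrt (CARD('d)))
                    - sqrt (lam\<^sup>2 - 1) * (3 / 2 + lam\<^sup>2 / 2))) * sqrt (lam\<^sup>2 - 1)"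
  shows "AE \<omega> in M. nn_cond_exp M (F k)
            (\<lambda>\<omega>. ennreal (exp (\<eta> * (Y (Suc k) \<omega> - thr)) * indicator {\<omega>. Y k \<omega> < thr} \<omega>)) \<omega>
          \<le> ennreal (exp (Ct * (1 - 2 * p) / (6 * sqrt (CARD('d)))))"
proof -
  interpret P: prob_space M by (rule prob)
  define d where "d = real CARD('d)"
  define t where "t = Ct*(1-2*p)/sqrt d"
  define s where "s = sqrt (lam^2-1)"
  define L where "L = lam^2"
  define C where "C = exp (Ct * (1 - 2 * p) / (6 * sqrt (CARD('d))))"
  have dpos: "d > 0" unfolding d_def by simp
  have tp: "t > 0" unfolding t_def using Ct p dpos by simp
  have t2: "t^2 = Ct^2*(1-2*p)^2/d" unfolding t_def using dpos by (simp add: power_divide power_mult_distrib)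
  have "Ct^2*(1-2*p)^2/(49*d) < 1/49" using lam_bounds(3) unfolding d_def by simp
  then have "t^2 < 1" unfolding t2 using dpos by (simp add: field_simps)
  then have t1: "t < 1" using power2_less_imp_less[of t 1] by simp
  have sp: "s > 0" unfolding s_def using lam_bounds(1) by simp
  have s2: "s^2 = L - 1" unfolding s_def L_def using lam_bounds(1) by simp
  have "L - 1 \<le> t^2/49" unfolding t2 L_def d_def using lam_bounds(2) by simp
  then have "s^2 \<le> (t/7)^2" unfolding s2 by (simp add: power_divide)
  then have s7: "s \<le> t/7" by (rule power2_le_imp_le) (use tp in linarith)
  have Ls: "L = 1 + s^2" using s2 by simp
  have Lpos: "L > 0" unfolding L_def using lam by simp
  have e1: "sqrt (lam^2-1) = s" by (simp add: s_def)
  have eta_eq: "\<eta> = s/(8*L) * (L*t/sqrt 2 - s*(3+L)/2)"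
    unfolding \<eta>_def e1 unfolding L_def[symmetric] t_def d_def using Lpos
    by (simp add: field_simps)
  have thr_eq: "thr = 1/(2* s^2)" unfolding thr_def s2 L_def by simp
  have r: "sqrt 2 > 0" "(sqrt 2)^2 = 2" by auto
  have key: "\<eta> * (1/2 + sqrt 2*L/s + L) \<le> t/6" and etapos: "\<eta> > 0"
    using realineq[OF r sp s7 t1 Ls] sp Lpos unfolding eta_eq by auto
  have Ct_eq: "Ct * (1 - 2 * p) / (6 * sqrt (CARD('d))) = t/6" unfolding t_def d_def by simp
  define f where "f = (\<lambda>\<omega>. ennreal (exp (\<eta> * (Y (Suc k) \<omega> - thr)) * indicator {\<omega>. Y k \<omega> < thr} \<omega>))"
  have pw: "f \<omega> \<le> ennreal C" if \<omega>: "\<omega> \<in> space M" for \<omega>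
  proof (cases "Y k \<omega> < thr")
    case False
    then show ?thesis unfolding f_def by simp
  next
    case True
    define u where "u = (lam^k/G) *\<^sub>R (x - iterate G lam a y k \<omega>)"
    define \<sigma> where "\<sigma> = sign (y k \<omega> - iterate G lam a y k \<omega> \<bullet> a k \<omega>)"
    have coef: "lam^Suc k/G * (G * inverse lam ^ k * \<sigma>) = lam * \<sigma>"
      using G lam by (simp add: field_simps power_inverse)
    have "(lam ^ Suc k / G) *\<^sub>R (x - iterate G lam a y (Suc k) \<omega>)
        = lam *\<^sub>R u - (lam * \<sigma>) *\<^sub>R a k \<omega>"
      unfolding u_def \<sigma>_def[symmetric] iterate.simps scaleR_diff_right scaleR_add_right scaleR_scaleR coef
      using lam by (simp add: algebra_simps)
    also have "\<dots> = lam *\<^sub>R (u - \<sigma> *\<^sub>R a k \<omega>)" by (simp add: algebra_simps)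
    finally have Y1: "Y (Suc k) \<omega> = L * (norm (u - \<sigma> *\<^sub>R a k \<omega>))^2"
      unfolding Y_def L_def using lam by (simp add: power_mult_distrib)
    have Y0: "Y k \<omega> = (norm u)^2" unfolding Y_def u_def by simp
    have sig: "\<bar>\<sigma>\<bar> = 1" unfolding \<sigma>_def sign_def by simp
    have "norm (u - \<sigma> *\<^sub>R a k \<omega>) \<le> norm u + norm (\<sigma> *\<^sub>R a k \<omega>)" by (rule norm_triangle_ineq4)
    also have "norm (\<sigma> *\<^sub>R a k \<omega>) = 1" using sig a_unit[OF \<omega>] by simp
    finally have n1: "norm (u - \<sigma> *\<^sub>R a k \<omega>) \<le> norm u + 1" .
    have "(norm u)^2 < (1/(sqrt 2 * s))^2" using True Y0 thr_eq sp
      by (simp add: power_divide power_mult_distrib)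
    then have nu: "norm u < 1/(sqrt 2 * s)" by (rule power2_less_imp_less) (use sp in simp)
    have "(norm (u - \<sigma> *\<^sub>R a k \<omega>))^2 \<le> (1/(sqrt 2 * s) + 1)^2"
      by (rule power_mono) (use n1 nu in linarith, simp)
    then have "Y (Suc k) \<omega> \<le> L * (1/(sqrt 2 * s) + 1)^2" unfolding Y1 using Lpos by simp
    also have "L * (1/(sqrt 2 * s) + 1)^2 = thr + (1/2 + sqrt 2*L/s + L)"
    proof -
      have "L * (1/(sqrt 2 * s) + 1)^2 = L/(2* s^2) + 2*L/(sqrt 2 * s) + L"
        using sp by (simp add: power2_sum power_divide power_mult_distrib field_simps sqrt2_rr) (simp add: power2_eq_square power4_eq_xxxx)
      also have "2*L/(sqrt 2 * s) = sqrt 2*L/s"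
        using sp by (simp add: field_simps sqrt2_rr)
      also have "L/(2* s^2) = thr + 1/2" unfolding thr_eq using Ls sp by (simp add: field_simps)
      finally show ?thesis by simp
    qed
    finally have "\<eta> * (Y (Suc k) \<omega> - thr) \<le> \<eta> * (1/2 + sqrt 2*L/s + L)"
      using etapos by (intro mult_left_mono) auto
    also note key
    finally have "exp (\<eta> * (Y (Suc k) \<omega> - thr)) \<le> C" unfolding C_def Ct_eq by simp
    then show ?thesis unfolding f_def using True by (simp add: ennreal_leI)
  qed
  have "AE \<omega> in M. nn_cond_exp M (F k) f \<omega> \<le> ennreal C"
  proof (cases "f \<in> borel_measurable M \<and> subalgebra M (F k)")
    case True
    interpret S: finite_measure_subalgebra M "F k"
      by (intro finite_measure_subalgebra.intro finite_measure_subalgebra_axioms.intro)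
         (use True P.finite_measure_axioms in auto)
    have "AE \<omega> in M. nn_cond_exp M (F k) f \<omega> \<le> nn_cond_exp M (F k) (\<lambda>_. ennreal C) \<omega>"
      using True pw by (intro S.nn_cond_exp_mono AE_I2) auto
    moreover have "AE \<omega> in M. (\<lambda>_. ennreal C) \<omega> = nn_cond_exp M (F k) (\<lambda>_. ennreal C) \<omega>"
      by (rule S.nn_cond_exp_F_meas) simp
    ultimately show ?thesis by eventually_elim simp
  next
    case False
    have "nn_cond_exp M (F k) f = (\<lambda>_. 0)" unfolding nn_cond_exp_def using False by (rule if_not_P)
    then show ?thesis by simp
  qed
  then show ?thesis unfolding f_def C_def .
qed

end
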